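(* Let $\mathcal{G}=(\mathcal{V},\mathcal{E})$ be a connected undirected graph (a transmission network) with nodes $\mathcal{V}=\{1,\dots,N\}$ and edges $e_1,\dots,e_L$, $\mathcal{L}=\{1,\dots,L\}$, each edge given a fixed orientation, with incidence matrix $\mathbf{Q}=(q_{il})\in\mathbb{R}^{N\times L}$ ($q_{il}=1$ if $i$ is the initial node of $e_l$, $-1$ if it is the terminal node, $0$ otherwise). For each node $i\in\mathcal{V}$ let $T'_{doi}>0$, $X_{di}>X'_{di}$, $B_{ii}<0$, set $\alpha_i=\frac{1}{X_{di}-X'_{di}}-B_{ii}$ and $\gamma_i=\frac{T'_{doi}}{X_{di}-X'_{di}}$, and consider the scalar linear node plant $$H^V_{pi}:\ \dot x^V_{pi}=-\tfrac{\alpha_i}{\gamma_i}x^V_{pi}+\tfrac{1}{\gamma_i}u^V_{pi},\qquad y^V_{pi}=x^V_{pi}.$$ For each edge $l\in\mathcal{L}$ let $\tau^V_l>0$, $K^V_{l[1]}>0$ and consider the edge controller $$H^V_{cl}:\ \dot x^V_{cl}=-\tfrac{1}{\tau^V_l}x^V_{cl}+\tfrac{K^V_{l[1]}}{\tau^V_l}u^V_{cl},\qquad y^V_{cl}=x^V_{cl}.$$ Consider the negative feedback interconnection in which, for each edge $e_l$ with initial node $i$ and terminal node $j$, $u^V_{cl}=y^V_{pi}-y^V_{pj}$, and for each node $i$, $u^V_{pi}=-\sum_{l=1}^L q_{il}y^V_{cl}$. Then this closed-loop system achieves output consensus: there exists an open domain $\mathcal{D}_c$ in the joint state space containing the origin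 such that $\lim_{t\to\infty}|y^V_{pi}(t)-y^V_{pj}(t)|=0$ for all $i,j\in\mathcal{V}$ and all initial conditions in $\mathcal{D}_c$.
   Context: In the application, $x^V_{pi}$ is the deviation of the voltage magnitude of generator bus $i$ from its nominal value; $T'_{doi}$ is the direct axis transient open-circuit time constant, $X_{di}$ and $X'_{di}$ the direct axis synchronous and transient reactances, and $B_{ii}$ the self-susceptance. *)

theory Defs
  imports "HOL-Analysis.Analysis"
begin

text \<open>An oriented multigraph: edges of the finite type 'e, nodes of the finite type 'n;
  edge l goes from node src l (initial) to node tgt l (terminal).\<close>

definition incidence :: "('e \<Rightarrow> 'n) \<Rightarrow> ('e \<Rightarrow> 'n) \<Rightarrow> 'n \<Rightarrow> 'e \<Rightarrow> real" where
  "incidence src tgt i l = (if src l = i then 1 else if tgt l = i then -1 else 0)"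

definition graph_connected :: "('e \<Rightarrow> 'n) \<Rightarrow> ('e \<Rightarrow> 'n) \<Rightarrow> bool" where
  "graph_connected src tgt \<longleftrightarrow>
     (\<forall>i j. (i, j) \<in> ({(src l, tgt l) | l. True} \<union> {(tgt l, src l) | l. True})\<^sup>*)"

definition alpha_c :: "real \<Rightarrow> real \<Rightarrow> real \<Rightarrow> real" where
  "alpha_c Xd Xd' B = 1 / (Xd - Xd') - B"

definition gamma_c :: "real \<Rightarrow> real \<Rightarrow> real \<Rightarrow> real" where
  "gamma_c Tdo Xd Xd' = Tdo / (Xd - Xd')"

definition closed_loop_solution ::
  "('e \<Rightarrow> 'n) \<Rightarrow> ('e \<Rightarrow> 'n) \<Rightarrow> ('n \<Rightarrow> real) \<Rightarrow> ('n \<Rightarrow> real) \<Rightarrow> ('n \<Rightarrow> real) \<Rightarrow> ('n \<Rightarrow> real)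
   \<Rightarrow> ('e \<Rightarrow> real) \<Rightarrow> ('e \<Rightarrow> real)
   \<Rightarrow> (real \<Rightarrow> real^'n::finite) \<Rightarrow> (real \<Rightarrow> real^'e::finite) \<Rightarrow> bool" where
  "closed_loop_solution src tgt Tdo Xd Xd' B tau K xp xc \<longleftrightarrow>
     (\<forall>t\<ge>0.
        (xp has_vector_derivative
           (\<chi> i. - (alpha_c (Xd i) (Xd' i) (B i) / gamma_c (Tdo i) (Xd i) (Xd' i)) * (xp t $ i)
                 + (1 / gamma_c (Tdo i) (Xd i) (Xd' i))
                   * (- (\<Sum>l\<in>UNIV. incidence src tgt i l * (xc t $ l))))) (at t within {0..})
      \<and> (xc has_vector_derivative
           (\<chi> l. - (1 / tau l) * (xc t $ l)
                 + (K l / tau l) * ((xp t $ src l) - (xp t $ tgt l)))) (at t within {0..}))"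

end

theory Submission
  imports Defs "HOL-Real_Asymp.Real_Asymp"
begin

lemma vnth_deriv:
  assumes "(f has_vector_derivative v) F"
  shows "((\<lambda>t. f t $ i) has_real_derivative v $ i) F"
proof -
  have "((\<lambda>t. f t $ i) has_derivative (\<lambda>h. (h *\<^sub>R v) $ i)) F"
    using bounded_linear.has_derivative[OF bounded_linear_vec_nth assms[unfolded has_vector_derivative_def]] .
  moreover have "(\<lambda>h. (h *\<^sub>R v) $ i) = (*) (v $ i)" by (auto simp: mult.commute)
  ultimately show ?thesis by (simp add: has_field_derivative_def)
qed

lemma incidence_sum:
  fixes src tgt :: "'e::finite \<Rightarrow> 'n::finite"
  assumes "\<And>l. src l \<noteq> tgt l"
  shows "(\<Sum>i\<in>UNIV. x i * (\<Sum>l\<in>UNIV. incidence src tgt i l * y l))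
       = (\<Sum>l\<in>UNIV. y l * (x (src l) - x (tgt l)))"
proof -
  have "(\<Sum>i\<in>UNIV. x i * (\<Sum>l\<in>UNIV. incidence src tgt i l * y l))
      = (\<Sum>i\<in>UNIV. \<Sum>l\<in>UNIV. y l * (incidence src tgt i l * x i))"
    by (simp add: sum_distrib_left algebra_simps)
  also have "\<dots> = (\<Sum>l\<in>UNIV. y l * (\<Sum>i\<in>UNIV. incidence src tgt i l * x i))"
    by (subst sum.swap) (simp add: sum_distrib_left)
  also have "\<dots> = (\<Sum>l\<in>UNIV. y l * (x (src l) - x (tgt l)))"
  proof (rule sum.cong[OF refl])
    fix l
    have "\<And>i. incidence src tgt i l * x i = (if src l = i then x i else 0) - (if tgt l = i then x i else 0)"
      using assms[of l] by (auto simp: incidence_def)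
    then have "(\<Sum>i\<in>UNIV. incidence src tgt i l * x i)
       = (\<Sum>i\<in>UNIV. (if src l = i then x i else 0)) - (\<Sum>i\<in>UNIV. (if tgt l = i then x i else 0))"
      by (simp add: sum_subtractf)
    also have "\<dots> = x (src l) - x (tgt l)" by simp
    finally show "y l * (\<Sum>i\<in>UNIV. incidence src tgt i l * x i) = y l * (x (src l) - x (tgt l))" by simp
  qed
  finally show ?thesis .
qed

theorem theorem4:
  fixes src tgt :: "'e::finite \<Rightarrow> 'n::finite"
    and Tdo Xd Xd' B :: "'n \<Rightarrow> real"
    and tau K :: "'e \<Rightarrow> real"
  assumes no_loops: "\<And>l. src l \<noteq> tgt l"
    and conn: "graph_connected src tgt"
    and Tdo_pos: "\<And>i. Tdo i > 0"
    and Xd_gt: "\<And>i. Xd i > Xd' i"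
    and B_neg: "\<And>i. B i < 0"
    and tau_pos: "\<And>l. tau l > 0"
    and K_pos: "\<And>l. K l > 0"
  shows "\<exists>D :: ((real^'n) \<times> (real^'e)) set. open D \<and> (0, 0) \<in> D \<and>
           (\<forall>xp xc. closed_loop_solution src tgt Tdo Xd Xd' B tau K xp xc
                 \<and> (xp 0, xc 0) \<in> D \<longrightarrow>
              (\<forall>i j. ((\<lambda>t. \<bar>xp t $ i - xp t $ j\<bar>) \<longlongrightarrow> 0) at_top))"
proof (intro exI[of _ UNIV] conjI allI impI)
  define a where "a i = alpha_c (Xd i) (Xd' i) (B i)" for i
  define g where "g i = gamma_c (Tdo i) (Xd i) (Xd' i)" for i
  have a_pos: "a i > 0" for i
    proof -
    have "1 / (Xd i - Xd' i) > 0" using Xd_gt[of i] by simp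
    then show ?thesis using B_neg[of i] unfolding a_def alpha_c_def by linarith
  qed
  have g_pos: "g i > 0" for i
    using Xd_gt[of i] Tdo_pos[of i] by (simp add: g_def gamma_c_def)
  define c1 where "c1 = Min (range (\<lambda>i. a i / g i))"
  define c2 where "c2 = Min (range (\<lambda>l. 1 / tau l))"
  define c where "c = min c1 c2"
  have c1_pos: "c1 > 0" unfolding c1_def using a_pos g_pos by (subst Min_gr_iff) auto
  have c2_pos: "c2 > 0" unfolding c2_def using tau_pos by (subst Min_gr_iff) auto
  have c_pos: "c > 0" using c1_pos c2_pos by (simp add: c_def)
  have c_a: "c * g i \<le> a i" for i
  proof -
    have "c \<le> a i / g i" unfolding c_def c1_def by (simp add: min.coboundedI1)
    then show ?thesis using g_pos[of i] by (simp add: pos_le_divide_eq)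
  qed
  have c_tau: "c * tau l \<le> 1" for l
  proof -
    have "c \<le> 1 / tau l" unfolding c_def c2_def by (simp add: min.coboundedI2)
    then show ?thesis using tau_pos[of l] by (simp add: pos_le_divide_eq)
  qed
  have gnn: "0 \<le> g i * r^2" for i r using g_pos[of i] by simp
  have tnn: "0 \<le> tau l * r^2 / K l" for l r using tau_pos[of l] K_pos[of l] by simp
  have tnn': "0 \<le> tau l / K l * r^2" for l r using tnn[of l r] by simp
  fix xp xc assume H: "closed_loop_solution src tgt Tdo Xd Xd' B tau K xp xc \<and> (xp 0, xc 0) \<in> UNIV"
  define V where "V s = (\<Sum>i\<in>UNIV. g i * (xp s $ i)^2) + (\<Sum>l\<in>UNIV. tau l / K l * (xc s $ l)^2)" for s
  define Dv where "Dv t = (\<Sum>i\<in>UNIV. g i * (2 * xp t $ i * (- (a i / g i) * (xp t $ i)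
                 + (1 / g i) * (- (\<Sum>l\<in>UNIV. incidence src tgt i l * (xc t $ l)))))) +
     (\<Sum>l\<in>UNIV. tau l / K l * (2 * xc t $ l * (- (1 / tau l) * (xc t $ l)
                 + (K l / tau l) * ((xp t $ src l) - (xp t $ tgt l)))))" for t
  have dV: "(V has_real_derivative Dv t) (at t within {0..})" if "t \<ge> 0" for t
  proof -
    have sol: "(xp has_vector_derivative
           (\<chi> i. - (a i / g i) * (xp t $ i)
                 + (1 / g i) * (- (\<Sum>l\<in>UNIV. incidence src tgt i l * (xc t $ l))))) (at t within {0..})"
      "(xc has_vector_derivative
           (\<chi> l. - (1 / tau l) * (xc t $ l)
                 + (K l / tau l) * ((xp t $ src l) - (xp t $ tgt l)))) (at t within {0..})"
      using H that unfolding closed_loop_solution_def a_def g_def by auto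
    note dp = vnth_deriv[OF sol(1), simplified]
    note dc = vnth_deriv[OF sol(2), simplified]
    have p: "((\<lambda>s. g i * (xp s $ i)^2) has_real_derivative g i * (2 * xp t $ i * (- (a i / g i) * (xp t $ i)
                 + (1 / g i) * (- (\<Sum>l\<in>UNIV. incidence src tgt i l * (xc t $ l)))))) (at t within {0..})" for i
      by (rule derivative_eq_intros dp refl | simp)+
    have q: "((\<lambda>s. tau l / K l * (xc s $ l)^2) has_real_derivative tau l / K l * (2 * xc t $ l * (- (1 / tau l) * (xc t $ l)
                 + (K l / tau l) * ((xp t $ src l) - (xp t $ tgt l))))) (at t within {0..})" for l
      by (rule derivative_eq_intros dc refl | simp)+
    show ?thesis unfolding V_def Dv_def
      by (intro DERIV_add DERIV_sum p q)
  qed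
  have Dv_le: "Dv t \<le> - c * V t" for t
  proof -
    have "Dv t = -2 * ((\<Sum>i\<in>UNIV. a i * (xp t $ i)^2) + (\<Sum>l\<in>UNIV. (xc t $ l)^2 / K l))
       - 2 * (\<Sum>i\<in>UNIV. xp t $ i * (\<Sum>l\<in>UNIV. incidence src tgt i l * (xc t $ l)))
       + 2 * (\<Sum>l\<in>UNIV. xc t $ l * ((xp t $ src l) - (xp t $ tgt l)))"
    proof -
      have t1: "g i * (2 * xp t $ i * (- (a i / g i) * (xp t $ i)
                 + (1 / g i) * (- (\<Sum>l\<in>UNIV. incidence src tgt i l * (xc t $ l)))))
          = -2 * (a i * (xp t $ i)^2) - 2 * (xp t $ i * (\<Sum>l\<in>UNIV. incidence src tgt i l * (xc t $ l)))" for i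
        using g_pos[of i] by (simp add: field_simps power2_eq_square)
      have t2: "tau l / K l * (2 * xc t $ l * (- (1 / tau l) * (xc t $ l)
                 + (K l / tau l) * ((xp t $ src l) - (xp t $ tgt l))))
          = -2 * ((xc t $ l)^2 / K l) + 2 * (xc t $ l * ((xp t $ src l) - (xp t $ tgt l)))" for l
        using tau_pos[of l] K_pos[of l] by (simp add: field_simps power2_eq_square)
      show ?thesis unfolding Dv_def t1 t2
        by (simp add: sum_subtractf sum.distrib sum_negf sum_distrib_left)
    qed
    also have "\<dots> = -2 * ((\<Sum>i\<in>UNIV. a i * (xp t $ i)^2) + (\<Sum>l\<in>UNIV. (xc t $ l)^2 / K l))"
      using incidence_sum[OF no_loops, where x="\<lambda>i. xp t $ i" and y="\<lambda>l. xc t $ l"] by simp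
    also have "\<dots> \<le> -2 * ((\<Sum>i\<in>UNIV. c * (g i * (xp t $ i)^2)) + (\<Sum>l\<in>UNIV. c * (tau l / K l * (xc t $ l)^2)))"
    proof -
      have "(\<Sum>i\<in>UNIV. c * (g i * (xp t $ i)^2)) \<le> (\<Sum>i\<in>UNIV. a i * (xp t $ i)^2)"
        by (rule sum_mono) (metis c_a mult.assoc mult_right_mono zero_le_power2)
      moreover have "(\<Sum>l\<in>UNIV. c * (tau l / K l * (xc t $ l)^2)) \<le> (\<Sum>l\<in>UNIV. (xc t $ l)^2 / K l)"
      proof (rule sum_mono)
        fix l
        have "c * tau l * ((xc t $ l)^2 / K l) \<le> 1 * ((xc t $ l)^2 / K l)"
          using c_tau[of l] K_pos[of l] by (intro mult_right_mono) auto
        then show "c * (tau l / K l * (xc t $ l)^2) \<le> (xc t $ l)^2 / K l" by simp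
      qed
      ultimately show ?thesis by (simp add: algebra_simps)
    qed
    also have "\<dots> = -2 * c * V t" unfolding V_def by (simp add: sum_distrib_left algebra_simps)
    also have "\<dots> \<le> - c * V t"
    proof -
      have "V t \<ge> 0" unfolding V_def
        by (intro add_nonneg_nonneg sum_nonneg gnn tnn')
      then show ?thesis using c_pos by (simp add: mult_nonneg_nonneg)
    qed
    finally show ?thesis .
  qed
  define W where "W s = exp (c * s) * V s" for s
  have dW: "(W has_real_derivative (c * exp (c * t) * V t + exp (c * t) * Dv t)) (at t within {0..})"
    if "t \<ge> 0" for t
    unfolding W_def by (auto intro!: derivative_eq_intros dV[OF that])
  have W_le: "W T \<le> V 0" if "T \<ge> 0" for T
  proof -
    have "W 0 \<ge> W T"
    proof (rule DERIV_nonpos_imp_decreasing_open[OF that])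
      fix x assume x: "0 < x" "x < T"
      have "at x within {0..} = at x" by (rule at_within_interior) (use x in simp)
      then have "(W has_real_derivative (c * exp (c * x) * V x + exp (c * x) * Dv x)) (at x)"
        using dW[of x] x by simp
      moreover have "c * exp (c * x) * V x + exp (c * x) * Dv x \<le> 0"
      proof -
        have "exp (c * x) * Dv x \<le> exp (c * x) * (- c * V x)"
          using Dv_le[of x] by (intro mult_left_mono) auto
        then show ?thesis by (simp add: algebra_simps)
      qed
      ultimately show "\<exists>y. (W has_real_derivative y) (at x) \<and> y \<le> 0" by blast
    next
      show "continuous_on {0..T} W"
        unfolding continuous_on_eq_continuous_within
      proof
        fix x assume "x \<in> {0..T}"
        then have "continuous (at x within {0..}) W" using DERIV_continuous[OF dW[of x]] by simp
        then show "continuous (at x within {0..T}) W" by (rule continuous_within_subset) auto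
      qed
    qed
    then show ?thesis by (simp add: W_def)
  qed
  have bound: "(xp T $ i)^2 \<le> V 0 / g i * exp (- c * T)" if "T \<ge> 0" for T i
  proof -
    have "g i * (xp T $ i)^2 \<le> (\<Sum>i\<in>UNIV. g i * (xp T $ i)^2)"
      by (rule member_le_sum) (simp_all add: gnn)
    also have "\<dots> \<le> V T" unfolding V_def
      by (simp add: sum_nonneg tnn)
    also have "\<dots> \<le> V 0 * exp (- c * T)"
    proof -
      have "exp (c * T) * V T \<le> V 0" using W_le[OF that] by (simp add: W_def)
      then have "exp (- c * T) * (exp (c * T) * V T) \<le> exp (- c * T) * V 0"
        by (intro mult_left_mono) auto
      moreover have "exp (- c * T) * (exp (c * T) * V T) = V T"
        by (simp add: mult.assoc[symmetric] exp_add[symmetric])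
      ultimately show ?thesis by (simp only: mult.commute)
    qed
    finally have "(xp T $ i)^2 * g i \<le> V 0 * exp (- c * T)" by (simp only: mult.commute)
    then have "(xp T $ i)^2 \<le> V 0 * exp (- c * T) / g i" using g_pos[of i] by (simp only: pos_le_divide_eq)
    then show ?thesis by simp
  qed
  have abs0: "((\<lambda>t. \<bar>xp t $ i\<bar>) \<longlongrightarrow> 0) at_top" for i
  proof -
    have e: "((\<lambda>t. V 0 / g i * exp (- c * t)) \<longlongrightarrow> 0) at_top"
      using c_pos by real_asymp
    have "((\<lambda>t. (xp t $ i)^2) \<longlongrightarrow> 0) at_top"
    proof (rule tendsto_sandwich[OF _ _ tendsto_const e])
      show "\<forall>\<^sub>F n in at_top. 0 \<le> (xp n $ i)\<^sup>2" by simp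
      show "\<forall>\<^sub>F n in at_top. (xp n $ i)\<^sup>2 \<le> V 0 / g i * exp (- c * n)"
        using eventually_ge_at_top[of "0::real"] by eventually_elim (rule bound)
    qed
    from tendsto_real_sqrt[OF this] show ?thesis by simp
  qed
  fix i j
  show "((\<lambda>t. \<bar>xp t $ i - xp t $ j\<bar>) \<longlongrightarrow> 0) at_top"
  proof (rule tendsto_sandwich[OF _ _ tendsto_const])
    show "\<forall>\<^sub>F n in at_top. 0 \<le> \<bar>xp n $ i - xp n $ j\<bar>" by simp
    show "\<forall>\<^sub>F n in at_top. \<bar>xp n $ i - xp n $ j\<bar> \<le> \<bar>xp n $ i\<bar> + \<bar>xp n $ j\<bar>" by (intro always_eventually allI abs_triangle_ineq4)
    show "((\<lambda>t. \<bar>xp t $ i\<bar> + \<bar>xp t $ j\<bar>) \<longlongrightarrow> 0) at_top"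
      using tendsto_add[OF abs0[of i] abs0[of j]] by simp
  qed
qed (auto)

end
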